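(* There exists a Moufang loop $M$ of order $3^{19}$ generated by four elements $a,b,c,d$ such that $(a,b,c)=(a,b,d)=(a,c,d)=(b,c,d)=1$ (so any three elements of the generating set $\{a,b,c,d\}$ associate, in every order and with repetitions allowed), but $([a,b],c,d)\neq 1$. In particular, $M$ is a nonassociative Moufang loop possessing a generating set every three elements of which associate.
   Context: A Moufang loop is a loop satisfying the identity $(xy)(zx)=(x(yz))x$. For elements $x,y,z$ of a Moufang loop, $[x,y]$ denotes the unique element $c$ with $xy=(yx)c$, and $(x,y,z)$ denotes the unique element $u$ with $(xy)z=(x(yz))u$. Elements $x,y,z$ are said to associate if $(x,y,z)=1$. *)

theory Defs
  imports Main
begin

definition loop :: "'a set \<Rightarrow> ('a \<Rightarrow> 'a \<Rightarrow> 'a) \<Rightarrow> 'a \<Rightarrow> bool" where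
  "loop M mult e \<longleftrightarrow>
     (\<forall>x\<in>M. \<forall>y\<in>M. mult x y \<in> M) \<and>
     e \<in> M \<and> (\<forall>x\<in>M. mult e x = x \<and> mult x e = x) \<and>
     (\<forall>a\<in>M. \<forall>b\<in>M. \<exists>!x. x \<in> M \<and> mult a x = b) \<and>
     (\<forall>a\<in>M. \<forall>b\<in>M. \<exists>!y. y \<in> M \<and> mult y a = b)"

definition moufang_loop :: "'a set \<Rightarrow> ('a \<Rightarrow> 'a \<Rightarrow> 'a) \<Rightarrow> 'a \<Rightarrow> bool" where
  "moufang_loop M mult e \<longleftrightarrow> loop M mult e \<and>
     (\<forall>x\<in>M. \<forall>y\<in>M. \<forall>z\<in>M.
        mult (mult x y) (mult z x) = mult (mult x (mult y z)) x)"

definition loop_comm :: "'a set \<Rightarrow> ('a \<Rightarrow> 'a \<Rightarrow> 'a) \<Rightarrow> 'a \<Rightarrow> 'a \<Rightarrow> 'a" where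
  "loop_comm M mult x y = (THE c. c \<in> M \<and> mult x y = mult (mult y x) c)"

definition loop_assoc :: "'a set \<Rightarrow> ('a \<Rightarrow> 'a \<Rightarrow> 'a) \<Rightarrow> 'a \<Rightarrow> 'a \<Rightarrow> 'a \<Rightarrow> 'a" where
  "loop_assoc M mult x y z = (THE u. u \<in> M \<and> mult (mult x y) z = mult (mult x (mult y z)) u)"

inductive_set subloop_gen :: "'a set \<Rightarrow> ('a \<Rightarrow> 'a \<Rightarrow> 'a) \<Rightarrow> 'a set \<Rightarrow> 'a set"
  for M mult S where
  gen: "x \<in> S \<Longrightarrow> x \<in> subloop_gen M mult S"
| mul: "x \<in> subloop_gen M mult S \<Longrightarrow> y \<in> subloop_gen M mult S \<Longrightarrow> mult x y \<in> subloop_gen M mult S"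
| ldiv: "x \<in> subloop_gen M mult S \<Longrightarrow> y \<in> subloop_gen M mult S \<Longrightarrow> z \<in> M \<Longrightarrow> mult x z = y
          \<Longrightarrow> z \<in> subloop_gen M mult S"
| rdiv: "x \<in> subloop_gen M mult S \<Longrightarrow> y \<in> subloop_gen M mult S \<Longrightarrow> z \<in> M \<Longrightarrow> mult z x = y
          \<Longrightarrow> z \<in> subloop_gen M mult S"

end

theory Submission imports Defs "HOL-Library.Numeral_Type" begin

type_synonym el = "27 \<times> 27 \<times> 27 \<times> 27 \<times> 3 \<times> 3 \<times> 3 \<times> 3 \<times> 3 \<times> 3 \<times> 3"

definition p0 :: "el \<Rightarrow> 27" where "p0 x = fst (x)"
definition p1 :: "el \<Rightarrow> 27" where "p1 x = fst (snd (x))"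
definition p2 :: "el \<Rightarrow> 27" where "p2 x = fst (snd (snd (x)))"
definition p3 :: "el \<Rightarrow> 27" where "p3 x = fst (snd (snd (snd (x))))"
definition p4 :: "el \<Rightarrow> 3" where "p4 x = fst (snd (snd (snd (snd (x)))))"
definition p5 :: "el \<Rightarrow> 3" where "p5 x = fst (snd (snd (snd (snd (snd (x))))))"
definition p6 :: "el \<Rightarrow> 3" where "p6 x = fst (snd (snd (snd (snd (snd (snd (x)))))))"
definition p7 :: "el \<Rightarrow> 3" where "p7 x = fst (snd (snd (snd (snd (snd (snd (snd (x))))))))"
definition p8 :: "el \<Rightarrow> 3" where "p8 x = fst (snd (snd (snd (snd (snd (snd (snd (snd (x)))))))))"
definition p9 :: "el \<Rightarrow> 3" where "p9 x = fst (snd (snd (snd (snd (snd (snd (snd (snd (snd (x))))))))))"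
definition p10 :: "el \<Rightarrow> 3" where "p10 x = snd (snd (snd (snd (snd (snd (snd (snd (snd (snd (x))))))))))"

lemmas pdefs = p0_def p1_def p2_def p3_def p4_def p5_def p6_def p7_def p8_def p9_def p10_def

definition r :: "27 \<Rightarrow> 3" where "r x = of_int (Rep_bit1 x)"

lemma r_of_int: "r (of_int k) = of_int k"
proof -
  have "Rep_bit1 (of_int k :: 27) = k mod 27"
    by (simp add: bit1.of_int_eq, rule Abs_bit1_inverse, simp)
  moreover have "(of_int (k mod 27) :: 3) = of_int k"
    by (simp add: bit1.of_int_eq mod_mod_cancel)
  ultimately show ?thesis by (simp add: r_def)
qed

lemma r_add: "r (x + y) = r x + r y"
  by (induct x rule: bit1_induct, induct y rule: bit1_induct) (metis of_int_add r_of_int)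

lemma r_diff: "r (x - y) = r x - r y"
  by (induct x rule: bit1_induct, induct y rule: bit1_induct) (metis of_int_diff r_of_int)

lemma r_0[simp]: "r 0 = 0" by (metis of_int_0 r_of_int)
lemma r_1[simp]: "r 1 = 1" by (metis of_int_1 r_of_int)

definition FF :: "3 \<Rightarrow> 3 \<Rightarrow> 3 \<Rightarrow> 3 \<Rightarrow> 3 \<Rightarrow> 3 \<Rightarrow> 3 \<Rightarrow> 3 \<Rightarrow> 3 \<Rightarrow> 3 \<Rightarrow> 3 \<Rightarrow> 3 \<Rightarrow> 3 \<Rightarrow> 3 \<Rightarrow> 3 \<Rightarrow> 3 \<Rightarrow> 3 \<Rightarrow> 3 \<Rightarrow> 3 \<Rightarrow> 3 \<Rightarrow> 3" where
  "FF x0 x1 x2 x3 x4 x5 x6 x7 x8 x9 y0 y1 y2 y3 y4 y5 y6 y7 y8 y9 = x0 * x1 * x3 * y2 - x0 * x2 * x3 * y1 - x0 * x2 * y8 - x0 * x3 * y7 + x0 * x8 * y2 + x0 * x9 * y1 + x0 * y1 * y2 * y3 - x0 * y1 * y9 + x0 * y3 * y7 - x1 * x2 * y6 - x1 * x3 * y5 + x1 * x5 * y3 - x1 * x9 * y0 + x1 * y0 * y9 + x1 * y2 * y6 + x2 * x3 * y0 * y1 + x2 * x4 * y3 + x2 * x6 * y1 + x2 * y0 * y8 - x2 * y3 * y4 - x3 * x4 * y2 + x3 * x7 * y0 - x3 * y0 * y1 * y2 + x3 * y1 * y5 + x3 * y2 * y4 - x5 * y1 * y3 - x6 * y1 * y2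 - x7 * y0 * y3 - x8 * y0 * y2"


lemma three: "(3::3) = 0" by simp

lemma core: "FF x0 x1 x2 x3 x4 x5 x6 x7 x8 x9 y0 y1 y2 y3 y4 y5 y6 y7 y8 y9 + FF z0 z1 z2 z3 z4 z5 z6 z7 z8 z9 x0 x1 x2 x3 x4 x5 x6 x7 x8 x9 + FF (x0 + y0) (x1 + y1) (x2 + y2) (x3 + y3) (x4 + y4 + x0 * y1) (x5 + y5 + x0 * y2) (x6 + y6 + x0 * y3) (x7 + y7 + x1 * y2) (x8 + y8 + x1 * y3) (x9 + y9 + x2 * y3) (z0 + x0) (z1 + x1) (z2 + x2) (z3 + x3) (z4 + x4 + z0 * x1) (z5 + x5 + z0 * x2) (z6 + x6 + z0 * x3) (z7 + x7 + z1 * x2) (z8 + x8 + z1 * x3) (z9 + x9 + z2 * x3) = FF y0 y1 y2 y3 y4 y5 y6 y7 y8 y9 z0 z1 z2 z3 z4 z5 z6 z7 z8 z9 + FF x0 x1 x2 x3 x4 x5 x6 x7 x8 x9 (y0 + z0) (y1 + z1) (y2 + z2) (y3 + z3) (y4 + z4 + y0 * z1) (y5 + z5 + y0 * z2) (y6 + z6 + y0 * z3) (y7 + z7 + y1 * z2) (y8 + z8 + y1 * z3) (y9 + z9 + y2 * z3) + FF (x0 + (y0 + z0)) (x1 + (y1 + z1)) (x2 + (y2 + z2)) (x3 + (y3 + z3)) (x4 + (y4 + z4 + y0 * z1) + x0 * (y1 + z1)) (x5 + (y5 + z5 + y0 * z2) + x0 * (y2 + z2)) (x6 + (y6 + z6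 + y0 * z3) + x0 * (y3 + z3)) (x7 + (y7 + z7 + y1 * z2) + x1 * (y2 + z2)) (x8 + (y8 + z8 + y1 * z3) + x1 * (y3 + z3)) (x9 + (y9 + z9 + y2 * z3) + x2 * (y3 + z3)) x0 x1 x2 x3 x4 x5 x6 x7 x8 x9"
  unfolding FF_def by (simp add: algebra_simps three)

definition lm :: "el \<Rightarrow> el \<Rightarrow> el" where
  "lm x y = (p0 x + p0 y, p1 x + p1 y, p2 x + p2 y, p3 x + p3 y, p4 x + p4 y + r (p0 x) * r (p1 y), p5 x + p5 y + r (p0 x) * r (p2 y), p6 x + p6 y + r (p0 x) * r (p3 y), p7 x + p7 y + r (p1 x) * r (p2 y), p8 x + p8 y + r (p1 x) * r (p3 y), p9 x + p9 y + r (p2 x) * r (p3 y), p10 x + p10 y + FF (r (p0 x)) (r (p1 x)) (r (p2 x)) (r (p3 x)) (p4 x) (p5 x) (p6 x) (p7 x) (p8 x) (p9 x) (r (p0 y)) (r (p1 y)) (r (p2 y)) (r (p3 y)) (p4 y) (p5 y) (p6 y) (p7 y) (p8 y) (p9 y))"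

lemma moufang_lm: "lm (lm x y) (lm z x) = lm (lm x (lm y z)) x"
  using core[of "r (p0 x)" "r (p1 x)" "r (p2 x)" "r (p3 x)" "p4 x" "p5 x" "p6 x" "p7 x" "p8 x" "p9 x" "r (p0 y)" "r (p1 y)" "r (p2 y)" "r (p3 y)" "p4 y" "p5 y" "p6 y" "p7 y" "p8 y" "p9 y" "r (p0 z)" "r (p1 z)" "r (p2 z)" "r (p3 z)" "p4 z" "p5 z" "p6 z" "p7 z" "p8 z" "p9 z"]
  by (simp add: lm_def pdefs r_add algebra_simps)

lemma el_eqI: "p0 x = p0 y \<Longrightarrow> p1 x = p1 y \<Longrightarrow> p2 x = p2 y \<Longrightarrow> p3 x = p3 y \<Longrightarrow> p4 x = p4 y \<Longrightarrow> p5 x = p5 y \<Longrightarrow> p6 x = p6 y \<Longrightarrow> p7 x = p7 y \<Longrightarrow> p8 x = p8 y \<Longrightarrow> p9 x = p9 y \<Longrightarrow> p10 x = p10 y \<Longrightarrow> x = y"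
  by (simp add: pdefs prod_eq_iff)

definition ld :: "el \<Rightarrow> el \<Rightarrow> el" where
  "ld a b = (let w0 = p0 b - p0 a; w1 = p1 b - p1 a; w2 = p2 b - p2 a; w3 = p3 b - p3 a; w4 = p4 b - p4 a - r (p0 a) * r w1; w5 = p5 b - p5 a - r (p0 a) * r w2; w6 = p6 b - p6 a - r (p0 a) * r w3; w7 = p7 b - p7 a - r (p1 a) * r w2; w8 = p8 b - p8 a - r (p1 a) * r w3; w9 = p9 b - p9 a - r (p2 a) * r w3; w10 = p10 b - p10 a - FF (r (p0 a)) (r (p1 a)) (r (p2 a)) (r (p3 a)) (p4 a) (p5 a) (p6 a) (p7 a) (p8 a) (p9 a) (r w0) (r w1) (r w2) (r w3) w4 w5 w6 w7 w8 w9 in (w0, w1, w2, w3, w4, w5, w6, w7, w8, w9, w10))"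

definition rd :: "el \<Rightarrow> el \<Rightarrow> el" where
  "rd a b = (let w0 = p0 b - p0 a; w1 = p1 b - p1 a; w2 = p2 b - p2 a; w3 = p3 b - p3 a; w4 = p4 b - p4 a - r w0 * r (p1 a); w5 = p5 b - p5 a - r w0 * r (p2 a); w6 = p6 b - p6 a - r w0 * r (p3 a); w7 = p7 b - p7 a - r w1 * r (p2 a); w8 = p8 b - p8 a - r w1 * r (p3 a); w9 = p9 b - p9 a - r w2 * r (p3 a); w10 = p10 b - p10 a - FF (r w0) (r w1) (r w2) (r w3) w4 w5 w6 w7 w8 w9 (r (p0 a)) (r (p1 a)) (r (p2 a)) (r (p3 a)) (p4 a) (p5 a) (p6 a) (p7 a) (p8 a) (p9 a) in (w0, w1, w2, w3, w4, w5, w6, w7, w8, w9, w10))"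

definition e0 :: el where "e0 = (0, 0, 0, 0, 0, 0, 0, 0, 0, 0, 0)"

lemma lm_ld: "lm a (ld a b) = b"
  by (rule el_eqI) (simp_all add: lm_def ld_def Let_def pdefs r_diff)

lemma ld_lm: "ld a (lm a x) = x"
  by (rule el_eqI) (simp_all add: lm_def ld_def Let_def pdefs r_diff r_add)

lemma lm_rd: "lm (rd a b) a = b"
  by (rule el_eqI) (simp_all add: lm_def rd_def Let_def pdefs r_diff)

lemma rd_lm: "rd a (lm y a) = y"
  by (rule el_eqI) (simp_all add: lm_def rd_def Let_def pdefs r_diff r_add)

lemma e0_l: "lm e0 x = x"
  by (rule el_eqI) (simp_all add: lm_def e0_def pdefs FF_def)

lemma e0_r: "lm x e0 = x"
  by (rule el_eqI) (simp_all add: lm_def e0_def pdefs FF_def)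

lemma lm_cancel: "lm a x = lm a y \<Longrightarrow> x = y"
  by (metis ld_lm)

lemma moufang_UNIV: "moufang_loop (UNIV::el set) lm e0"
  unfolding moufang_loop_def loop_def
proof (intro conjI ballI)
  fix a b :: el
  show "\<exists>!x. x \<in> UNIV \<and> lm a x = b"
    by (rule ex1I[of _ "ld a b"]) (auto simp: lm_ld, metis ld_lm)
  show "\<exists>!y. y \<in> UNIV \<and> lm y a = b"
    by (rule ex1I[of _ "rd a b"]) (auto simp: lm_rd, metis rd_lm)
qed (auto simp: e0_l e0_r moufang_lm)

definition gA :: el where "gA = (1, 0, 0, 0, 0, 0, 0, 0, 0, 0, 0)"
definition gB :: el where "gB = (0, 1, 0, 0, 0, 0, 0, 0, 0, 0, 0)"
definition gC :: el where "gC = (0, 0, 1, 0, 0, 0, 0, 0, 0, 0, 0)"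
definition gD :: el where "gD = (0, 0, 0, 1, 0, 0, 0, 0, 0, 0, 0)"
definition k4 :: el where "k4 = (0, 0, 0, 0, 1, 0, 0, 0, 0, 0, 0)"
definition k5 :: el where "k5 = (0, 0, 0, 0, 0, 1, 0, 0, 0, 0, 0)"
definition k6 :: el where "k6 = (0, 0, 0, 0, 0, 0, 1, 0, 0, 0, 0)"
definition k7 :: el where "k7 = (0, 0, 0, 0, 0, 0, 0, 1, 0, 0, 0)"
definition k8 :: el where "k8 = (0, 0, 0, 0, 0, 0, 0, 0, 1, 0, 0)"
definition k9 :: el where "k9 = (0, 0, 0, 0, 0, 0, 0, 0, 0, 1, 0)"
definition tau :: el where "tau = (0, 0, 0, 0, 0, 0, 0, 0, 0, 0, 1)"

lemmas cdefs = gA_def gB_def gC_def gD_def k4_def k5_def k6_def k7_def k8_def k9_def tau_def e0_def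

lemma as1: "lm (lm gA gB) gC = lm (lm gA (lm gB gC)) e0"
  by (simp add: cdefs lm_def pdefs FF_def)
lemma as2: "lm (lm gA gB) gD = lm (lm gA (lm gB gD)) e0"
  by (simp add: cdefs lm_def pdefs FF_def)
lemma as3: "lm (lm gA gC) gD = lm (lm gA (lm gC gD)) e0"
  by (simp add: cdefs lm_def pdefs FF_def)
lemma as4: "lm (lm gB gC) gD = lm (lm gB (lm gC gD)) e0"
  by (simp add: cdefs lm_def pdefs FF_def)
lemma cm: "lm gA gB = lm (lm gB gA) k4"
  by (simp add: cdefs lm_def pdefs FF_def)
lemma as5: "lm (lm k4 gC) gD = lm (lm k4 (lm gC gD)) tau"
  by (simp add: cdefs lm_def pdefs FF_def)
lemma tau_ne: "tau \<noteq> e0"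
  by (simp add: cdefs)
lemma cm4: "lm gA gB = lm (lm gB gA) k4"
  by (simp add: cdefs lm_def pdefs FF_def)
lemma cm5: "lm gA gC = lm (lm gC gA) k5"
  by (simp add: cdefs lm_def pdefs FF_def)
lemma cm6: "lm gA gD = lm (lm gD gA) k6"
  by (simp add: cdefs lm_def pdefs FF_def)
lemma cm7: "lm gB gC = lm (lm gC gB) k7"
  by (simp add: cdefs lm_def pdefs FF_def)
lemma cm8: "lm gB gD = lm (lm gD gB) k8"
  by (simp add: cdefs lm_def pdefs FF_def)
lemma cm9: "lm gC gD = lm (lm gD gC) k9"
  by (simp add: cdefs lm_def pdefs FF_def)

abbreviation "SG \<equiv> subloop_gen (UNIV::el set) lm {gA, gB, gC, gD}"

lemma ldiv_mem: "x \<in> SG \<Longrightarrow> lm x z \<in> SG \<Longrightarrow> z \<in> SG"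
  by (rule subloop_gen.ldiv[where x=x and y="lm x z"]) auto

lemma gens_mem: "gA \<in> SG" "gB \<in> SG" "gC \<in> SG" "gD \<in> SG"
  by (auto intro: subloop_gen.gen)

lemma mul_mem: "x \<in> SG \<Longrightarrow> y \<in> SG \<Longrightarrow> lm x y \<in> SG"
  by (rule subloop_gen.mul)

lemma iter_mem: "g \<in> SG \<Longrightarrow> (lm g ^^ n) v \<in> SG \<Longrightarrow> v \<in> SG"
proof (induction n arbitrary: v)
  case 0 then show ?case by simp
next
  case (Suc n)
  have "(lm g ^^ n) (lm g v) \<in> SG" using Suc.prems by (simp add: funpow_Suc_right del: funpow.simps)
  then have "lm g v \<in> SG" using Suc.IH Suc.prems(1) by blast
  then show ?case using ldiv_mem Suc.prems(1) by blast
qed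

lemma ex_n: "\<exists>n. (x::'a::finite bit1) + of_nat n = 0"
proof -
  obtain z where z: "- x = of_int z" "0 \<le> z" by (cases "- x" rule: bit1_cases) auto
  have xz: "x = - of_int z" using z(1) by (metis minus_minus)
  have "x + of_nat (nat z) = 0" using z(2) by (simp add: xz)
  then show ?thesis by blast
qed

lemma stage:
  fixes P :: "el \<Rightarrow> 'a::finite bit1"
  assumes g: "g \<in> SG"
    and Zi: "\<And>v. Z v \<Longrightarrow> Z (lm g v)"
    and Pi: "\<And>v. Z v \<Longrightarrow> P (lm g v) = 1 + P v"
    and base: "\<And>v. Z v \<Longrightarrow> P v = 0 \<Longrightarrow> v \<in> SG"
    and v: "Z v"
  shows "v \<in> SG"
proof -
  obtain n where n: "P v + of_nat n = 0" using ex_n by blast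
  have it: "Z ((lm g ^^ k) v) \<and> P ((lm g ^^ k) v) = P v + of_nat k" for k
    by (induction k) (auto simp: Zi Pi v algebra_simps)
  have "(lm g ^^ n) v \<in> SG" using it[of n] n base by auto
  then show ?thesis using iter_mem g by blast
qed

lemma k_mem: "k4 \<in> SG" "k5 \<in> SG" "k6 \<in> SG" "k7 \<in> SG" "k8 \<in> SG" "k9 \<in> SG"
  by (metis cm4 cm5 cm6 cm7 cm8 cm9 ldiv_mem mul_mem gens_mem)+

lemma tau_mem: "tau \<in> SG"
  by (metis as5 ldiv_mem mul_mem gens_mem k_mem(1))

lemma e0_mem: "e0 \<in> SG"
  by (metis e0_r ldiv_mem gens_mem(1))

lemma st10: "p0 v = 0 \<and> p1 v = 0 \<and> p2 v = 0 \<and> p3 v = 0 \<and> p4 v = 0 \<and> p5 v = 0 \<and> p6 v = 0 \<and> p7 v = 0 \<and> p8 v = 0 \<and> p9 v = 0 \<Longrightarrow> v \<in> SG"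
proof (rule stage[where Z="(\<lambda>v. p0 v = 0 \<and> p1 v = 0 \<and> p2 v = 0 \<and> p3 v = 0 \<and> p4 v = 0 \<and> p5 v = 0 \<and> p6 v = 0 \<and> p7 v = 0 \<and> p8 v = 0 \<and> p9 v = 0)" and P=p10 and g=tau])
  show "tau \<in> SG" using gens_mem k_mem tau_mem by auto
  show "\<And>v. (\<lambda>v. p0 v = 0 \<and> p1 v = 0 \<and> p2 v = 0 \<and> p3 v = 0 \<and> p4 v = 0 \<and> p5 v = 0 \<and> p6 v = 0 \<and> p7 v = 0 \<and> p8 v = 0 \<and> p9 v = 0) v \<Longrightarrow> (\<lambda>v. p0 v = 0 \<and> p1 v = 0 \<and> p2 v = 0 \<and> p3 v = 0 \<and> p4 v = 0 \<and> p5 v = 0 \<and> p6 v = 0 \<and> p7 v = 0 \<and> p8 v = 0 \<and> p9 v = 0) (lm tau v)" by (auto simp: lm_def cdefs pdefs)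
  show "\<And>v. (\<lambda>v. p0 v = 0 \<and> p1 v = 0 \<and> p2 v = 0 \<and> p3 v = 0 \<and> p4 v = 0 \<and> p5 v = 0 \<and> p6 v = 0 \<and> p7 v = 0 \<and> p8 v = 0 \<and> p9 v = 0) v \<Longrightarrow> p10 (lm tau v) = 1 + p10 v" by (auto simp: lm_def cdefs pdefs FF_def algebra_simps)
  show "v \<in> SG" if "(\<lambda>v. p0 v = 0 \<and> p1 v = 0 \<and> p2 v = 0 \<and> p3 v = 0 \<and> p4 v = 0 \<and> p5 v = 0 \<and> p6 v = 0 \<and> p7 v = 0 \<and> p8 v = 0 \<and> p9 v = 0) v" "p10 v = 0" for v
    proof -
      have "v = e0" using that by (intro el_eqI) (simp_all add: e0_def pdefs)
      then show ?thesis using e0_mem by simp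
    qed
qed auto

lemma st9: "p0 v = 0 \<and> p1 v = 0 \<and> p2 v = 0 \<and> p3 v = 0 \<and> p4 v = 0 \<and> p5 v = 0 \<and> p6 v = 0 \<and> p7 v = 0 \<and> p8 v = 0 \<Longrightarrow> v \<in> SG"
proof (rule stage[where Z="(\<lambda>v. p0 v = 0 \<and> p1 v = 0 \<and> p2 v = 0 \<and> p3 v = 0 \<and> p4 v = 0 \<and> p5 v = 0 \<and> p6 v = 0 \<and> p7 v = 0 \<and> p8 v = 0)" and P=p9 and g=k9])
  show "k9 \<in> SG" using gens_mem k_mem tau_mem by auto
  show "\<And>v. (\<lambda>v. p0 v = 0 \<and> p1 v = 0 \<and> p2 v = 0 \<and> p3 v = 0 \<and> p4 v = 0 \<and> p5 v = 0 \<and> p6 v = 0 \<and> p7 v = 0 \<and> p8 v = 0) v \<Longrightarrow> (\<lambda>v. p0 v = 0 \<and> p1 v = 0 \<and> p2 v = 0 \<and> p3 v = 0 \<and> p4 v = 0 \<and> p5 v = 0 \<and> p6 v = 0 \<and> p7 v = 0 \<and> p8 v = 0) (lm k9 v)" by (auto simp: lm_def cdefs pdefs)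
  show "\<And>v. (\<lambda>v. p0 v = 0 \<and> p1 v = 0 \<and> p2 v = 0 \<and> p3 v = 0 \<and> p4 v = 0 \<and> p5 v = 0 \<and> p6 v = 0 \<and> p7 v = 0 \<and> p8 v = 0) v \<Longrightarrow> p9 (lm k9 v) = 1 + p9 v" by (auto simp: lm_def cdefs pdefs algebra_simps)
  show "v \<in> SG" if "(\<lambda>v. p0 v = 0 \<and> p1 v = 0 \<and> p2 v = 0 \<and> p3 v = 0 \<and> p4 v = 0 \<and> p5 v = 0 \<and> p6 v = 0 \<and> p7 v = 0 \<and> p8 v = 0) v" "p9 v = 0" for v
    using that st10 by auto
qed auto

lemma st8: "p0 v = 0 \<and> p1 v = 0 \<and> p2 v = 0 \<and> p3 v = 0 \<and> p4 v = 0 \<and> p5 v = 0 \<and> p6 v = 0 \<and> p7 v = 0 \<Longrightarrow> v \<in> SG"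
proof (rule stage[where Z="(\<lambda>v. p0 v = 0 \<and> p1 v = 0 \<and> p2 v = 0 \<and> p3 v = 0 \<and> p4 v = 0 \<and> p5 v = 0 \<and> p6 v = 0 \<and> p7 v = 0)" and P=p8 and g=k8])
  show "k8 \<in> SG" using gens_mem k_mem tau_mem by auto
  show "\<And>v. (\<lambda>v. p0 v = 0 \<and> p1 v = 0 \<and> p2 v = 0 \<and> p3 v = 0 \<and> p4 v = 0 \<and> p5 v = 0 \<and> p6 v = 0 \<and> p7 v = 0) v \<Longrightarrow> (\<lambda>v. p0 v = 0 \<and> p1 v = 0 \<and> p2 v = 0 \<and> p3 v = 0 \<and> p4 v = 0 \<and> p5 v = 0 \<and> p6 v = 0 \<and> p7 v = 0) (lm k8 v)" by (auto simp: lm_def cdefs pdefs)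
  show "\<And>v. (\<lambda>v. p0 v = 0 \<and> p1 v = 0 \<and> p2 v = 0 \<and> p3 v = 0 \<and> p4 v = 0 \<and> p5 v = 0 \<and> p6 v = 0 \<and> p7 v = 0) v \<Longrightarrow> p8 (lm k8 v) = 1 + p8 v" by (auto simp: lm_def cdefs pdefs algebra_simps)
  show "v \<in> SG" if "(\<lambda>v. p0 v = 0 \<and> p1 v = 0 \<and> p2 v = 0 \<and> p3 v = 0 \<and> p4 v = 0 \<and> p5 v = 0 \<and> p6 v = 0 \<and> p7 v = 0) v" "p8 v = 0" for v
    using that st9 by auto
qed auto

lemma st7: "p0 v = 0 \<and> p1 v = 0 \<and> p2 v = 0 \<and> p3 v = 0 \<and> p4 v = 0 \<and> p5 v = 0 \<and> p6 v = 0 \<Longrightarrow> v \<in> SG"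
proof (rule stage[where Z="(\<lambda>v. p0 v = 0 \<and> p1 v = 0 \<and> p2 v = 0 \<and> p3 v = 0 \<and> p4 v = 0 \<and> p5 v = 0 \<and> p6 v = 0)" and P=p7 and g=k7])
  show "k7 \<in> SG" using gens_mem k_mem tau_mem by auto
  show "\<And>v. (\<lambda>v. p0 v = 0 \<and> p1 v = 0 \<and> p2 v = 0 \<and> p3 v = 0 \<and> p4 v = 0 \<and> p5 v = 0 \<and> p6 v = 0) v \<Longrightarrow> (\<lambda>v. p0 v = 0 \<and> p1 v = 0 \<and> p2 v = 0 \<and> p3 v = 0 \<and> p4 v = 0 \<and> p5 v = 0 \<and> p6 v = 0) (lm k7 v)" by (auto simp: lm_def cdefs pdefs)
  show "\<And>v. (\<lambda>v. p0 v = 0 \<and> p1 v = 0 \<and> p2 v = 0 \<and> p3 v = 0 \<and> p4 v = 0 \<and> p5 v = 0 \<and> p6 v = 0) v \<Longrightarrow> p7 (lm k7 v) = 1 + p7 v" by (auto simp: lm_def cdefs pdefs algebra_simps)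
  show "v \<in> SG" if "(\<lambda>v. p0 v = 0 \<and> p1 v = 0 \<and> p2 v = 0 \<and> p3 v = 0 \<and> p4 v = 0 \<and> p5 v = 0 \<and> p6 v = 0) v" "p7 v = 0" for v
    using that st8 by auto
qed auto

lemma st6: "p0 v = 0 \<and> p1 v = 0 \<and> p2 v = 0 \<and> p3 v = 0 \<and> p4 v = 0 \<and> p5 v = 0 \<Longrightarrow> v \<in> SG"
proof (rule stage[where Z="(\<lambda>v. p0 v = 0 \<and> p1 v = 0 \<and> p2 v = 0 \<and> p3 v = 0 \<and> p4 v = 0 \<and> p5 v = 0)" and P=p6 and g=k6])
  show "k6 \<in> SG" using gens_mem k_mem tau_mem by auto
  show "\<And>v. (\<lambda>v. p0 v = 0 \<and> p1 v = 0 \<and> p2 v = 0 \<and> p3 v = 0 \<and> p4 v = 0 \<and> p5 v = 0) v \<Longrightarrow> (\<lambda>v. p0 v = 0 \<and> p1 v = 0 \<and> p2 v = 0 \<and> p3 v = 0 \<and> p4 v = 0 \<and> p5 v = 0) (lm k6 v)" by (auto simp: lm_def cdefs pdefs)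
  show "\<And>v. (\<lambda>v. p0 v = 0 \<and> p1 v = 0 \<and> p2 v = 0 \<and> p3 v = 0 \<and> p4 v = 0 \<and> p5 v = 0) v \<Longrightarrow> p6 (lm k6 v) = 1 + p6 v" by (auto simp: lm_def cdefs pdefs algebra_simps)
  show "v \<in> SG" if "(\<lambda>v. p0 v = 0 \<and> p1 v = 0 \<and> p2 v = 0 \<and> p3 v = 0 \<and> p4 v = 0 \<and> p5 v = 0) v" "p6 v = 0" for v
    using that st7 by auto
qed auto

lemma st5: "p0 v = 0 \<and> p1 v = 0 \<and> p2 v = 0 \<and> p3 v = 0 \<and> p4 v = 0 \<Longrightarrow> v \<in> SG"
proof (rule stage[where Z="(\<lambda>v. p0 v = 0 \<and> p1 v = 0 \<and> p2 v = 0 \<and> p3 v = 0 \<and> p4 v = 0)" and P=p5 and g=k5])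
  show "k5 \<in> SG" using gens_mem k_mem tau_mem by auto
  show "\<And>v. (\<lambda>v. p0 v = 0 \<and> p1 v = 0 \<and> p2 v = 0 \<and> p3 v = 0 \<and> p4 v = 0) v \<Longrightarrow> (\<lambda>v. p0 v = 0 \<and> p1 v = 0 \<and> p2 v = 0 \<and> p3 v = 0 \<and> p4 v = 0) (lm k5 v)" by (auto simp: lm_def cdefs pdefs)
  show "\<And>v. (\<lambda>v. p0 v = 0 \<and> p1 v = 0 \<and> p2 v = 0 \<and> p3 v = 0 \<and> p4 v = 0) v \<Longrightarrow> p5 (lm k5 v) = 1 + p5 v" by (auto simp: lm_def cdefs pdefs algebra_simps)
  show "v \<in> SG" if "(\<lambda>v. p0 v = 0 \<and> p1 v = 0 \<and> p2 v = 0 \<and> p3 v = 0 \<and> p4 v = 0) v" "p5 v = 0" for v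
    using that st6 by auto
qed auto

lemma st4: "p0 v = 0 \<and> p1 v = 0 \<and> p2 v = 0 \<and> p3 v = 0 \<Longrightarrow> v \<in> SG"
proof (rule stage[where Z="(\<lambda>v. p0 v = 0 \<and> p1 v = 0 \<and> p2 v = 0 \<and> p3 v = 0)" and P=p4 and g=k4])
  show "k4 \<in> SG" using gens_mem k_mem tau_mem by auto
  show "\<And>v. (\<lambda>v. p0 v = 0 \<and> p1 v = 0 \<and> p2 v = 0 \<and> p3 v = 0) v \<Longrightarrow> (\<lambda>v. p0 v = 0 \<and> p1 v = 0 \<and> p2 v = 0 \<and> p3 v = 0) (lm k4 v)" by (auto simp: lm_def cdefs pdefs)
  show "\<And>v. (\<lambda>v. p0 v = 0 \<and> p1 v = 0 \<and> p2 v = 0 \<and> p3 v = 0) v \<Longrightarrow> p4 (lm k4 v) = 1 + p4 v" by (auto simp: lm_def cdefs pdefs algebra_simps)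
  show "v \<in> SG" if "(\<lambda>v. p0 v = 0 \<and> p1 v = 0 \<and> p2 v = 0 \<and> p3 v = 0) v" "p4 v = 0" for v
    using that st5 by auto
qed auto

lemma st3: "p0 v = 0 \<and> p1 v = 0 \<and> p2 v = 0 \<Longrightarrow> v \<in> SG"
proof (rule stage[where Z="(\<lambda>v. p0 v = 0 \<and> p1 v = 0 \<and> p2 v = 0)" and P=p3 and g=gD])
  show "gD \<in> SG" using gens_mem k_mem tau_mem by auto
  show "\<And>v. (\<lambda>v. p0 v = 0 \<and> p1 v = 0 \<and> p2 v = 0) v \<Longrightarrow> (\<lambda>v. p0 v = 0 \<and> p1 v = 0 \<and> p2 v = 0) (lm gD v)" by (auto simp: lm_def cdefs pdefs)
  show "\<And>v. (\<lambda>v. p0 v = 0 \<and> p1 v = 0 \<and> p2 v = 0) v \<Longrightarrow> p3 (lm gD v) = 1 + p3 v" by (auto simp: lm_def cdefs pdefs algebra_simps)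
  show "v \<in> SG" if "(\<lambda>v. p0 v = 0 \<and> p1 v = 0 \<and> p2 v = 0) v" "p3 v = 0" for v
    using that st4 by auto
qed auto

lemma st2: "p0 v = 0 \<and> p1 v = 0 \<Longrightarrow> v \<in> SG"
proof (rule stage[where Z="(\<lambda>v. p0 v = 0 \<and> p1 v = 0)" and P=p2 and g=gC])
  show "gC \<in> SG" using gens_mem k_mem tau_mem by auto
  show "\<And>v. (\<lambda>v. p0 v = 0 \<and> p1 v = 0) v \<Longrightarrow> (\<lambda>v. p0 v = 0 \<and> p1 v = 0) (lm gC v)" by (auto simp: lm_def cdefs pdefs)
  show "\<And>v. (\<lambda>v. p0 v = 0 \<and> p1 v = 0) v \<Longrightarrow> p2 (lm gC v) = 1 + p2 v" by (auto simp: lm_def cdefs pdefs algebra_simps)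
  show "v \<in> SG" if "(\<lambda>v. p0 v = 0 \<and> p1 v = 0) v" "p2 v = 0" for v
    using that st3 by auto
qed auto

lemma st1: "p0 v = 0 \<Longrightarrow> v \<in> SG"
proof (rule stage[where Z="(\<lambda>v. p0 v = 0)" and P=p1 and g=gB])
  show "gB \<in> SG" using gens_mem k_mem tau_mem by auto
  show "\<And>v. (\<lambda>v. p0 v = 0) v \<Longrightarrow> (\<lambda>v. p0 v = 0) (lm gB v)" by (auto simp: lm_def cdefs pdefs)
  show "\<And>v. (\<lambda>v. p0 v = 0) v \<Longrightarrow> p1 (lm gB v) = 1 + p1 v" by (auto simp: lm_def cdefs pdefs algebra_simps)
  show "v \<in> SG" if "(\<lambda>v. p0 v = 0) v" "p1 v = 0" for v
    using that st2 by auto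
qed auto

lemma st0: "True \<Longrightarrow> v \<in> SG"
proof (rule stage[where Z="(\<lambda>v. True)" and P=p0 and g=gA])
  show "gA \<in> SG" using gens_mem k_mem tau_mem by auto
  show "\<And>v. (\<lambda>v. True) v \<Longrightarrow> (\<lambda>v. True) (lm gA v)" by (auto simp: lm_def cdefs pdefs)
  show "\<And>v. (\<lambda>v. True) v \<Longrightarrow> p0 (lm gA v) = 1 + p0 v" by (auto simp: lm_def cdefs pdefs algebra_simps)
  show "v \<in> SG" if "(\<lambda>v. True) v" "p0 v = 0" for v
    using that st1 by auto
qed auto

lemma gen_UNIV: "SG = UNIV"
  using st0 by auto



lemma tr_moufang:
  fixes h :: "'a \<Rightarrow> nat"
  assumes bij: "bij_betw h UNIV N" and ml: "moufang_loop (UNIV::'a set) m e"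
  defines "g \<equiv> inv_into UNIV h"
  shows "moufang_loop N (\<lambda>x y. h (m (g x) (g y))) (h e)"
proof -
  have gh: "g (h u) = u" for u using bij by (simp add: g_def bij_betw_inv_into_left)
  have hg: "x \<in> N \<Longrightarrow> h (g x) = x" for x using bij by (simp add: g_def bij_betw_inv_into_right)
  have hN: "h u \<in> N" for u using bij by (auto simp: bij_betw_def)
  have injh: "h u = h v \<Longrightarrow> u = v" for u v using gh by metis
  from ml have e1: "m e x = x" "m x e = x" for x by (auto simp: moufang_loop_def loop_def)
  from ml have ex1l: "\<exists>!x. m a x = b" for a b by (auto simp: moufang_loop_def loop_def)
  from ml have ex1r: "\<exists>!y. m y a = b" for a b by (auto simp: moufang_loop_def loop_def)
  from ml have mf: "m (m x y) (m z x) = m (m x (m y z)) x" for x y z by (auto simp: moufang_loop_def loop_def)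
  show ?thesis
    unfolding moufang_loop_def loop_def
  proof (intro conjI ballI)
    fix a b assume a: "a \<in> N" and b: "b \<in> N"
    obtain u where u: "m (g a) u = g b" using ex1l by blast
    show "\<exists>!x. x \<in> N \<and> h (m (g a) (g x)) = b"
    proof (rule ex1I[of _ "h u"])
      show "h u \<in> N \<and> h (m (g a) (g (h u))) = b" using u hN gh hg b by simp
      fix x assume x: "x \<in> N \<and> h (m (g a) (g x)) = b"
      then have "m (g a) (g x) = g b" using gh by metis
      then have "g x = u" using u ex1l by blast
      then show "x = h u" using x hg by metis
    qed
    obtain w where w: "m w (g a) = g b" using ex1r by blast
    show "\<exists>!y. y \<in> N \<and> h (m (g y) (g a)) = b"
    proof (rule ex1I[of _ "h w"])
      show "h w \<in> N \<and> h (m (g (h w)) (g a)) = b" using w hN gh hg b by simp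
      fix x assume x: "x \<in> N \<and> h (m (g x) (g a)) = b"
      then have "m (g x) (g a) = g b" using gh by metis
      then have "g x = w" using w ex1r by blast
      then show "x = h w" using x hg by metis
    qed
  qed (auto simp: hN gh hg e1 mf)
qed

lemma tr_gen:
  fixes h :: "'a \<Rightarrow> nat"
  assumes bij: "bij_betw h UNIV N" and gen: "subloop_gen (UNIV::'a set) m S = UNIV"
  defines "g \<equiv> inv_into UNIV h"
  shows "subloop_gen N (\<lambda>x y. h (m (g x) (g y))) (h ` S) = N"
proof -
  have gh: "g (h u) = u" for u using bij by (simp add: g_def bij_betw_inv_into_left)
  have hN: "h u \<in> N" for u using bij by (auto simp: bij_betw_def)
  have NI: "x \<in> N \<Longrightarrow> \<exists>u. x = h u" for x using bij by (auto simp: bij_betw_def)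
  let ?m = "\<lambda>x y. h (m (g x) (g y))"
  have sub: "x \<in> subloop_gen N ?m (h ` S) \<Longrightarrow> x \<in> N" for x
    by (induction rule: subloop_gen.induct) (auto simp: hN)
  have sup: "u \<in> subloop_gen UNIV m S \<Longrightarrow> h u \<in> subloop_gen N ?m (h ` S)" for u
  proof (induction rule: subloop_gen.induct)
    case (gen x) then show ?case by (auto intro: subloop_gen.gen)
  next
    case (mul x y) then show ?case using subloop_gen.mul[of "h x" N ?m "h ` S" "h y"] by (simp add: gh)
  next
    case (ldiv x y z) then show ?case
      using subloop_gen.ldiv[of "h x" N ?m "h ` S" "h y" "h z"] by (simp add: gh hN)
  next
    case (rdiv x y z) then show ?case
      using subloop_gen.rdiv[of "h x" N ?m "h ` S" "h y" "h z"] by (simp add: gh hN)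
  qed
  show ?thesis
  proof
    show "subloop_gen N ?m (h ` S) \<subseteq> N" using sub by blast
    show "N \<subseteq> subloop_gen N ?m (h ` S)" using NI sup gen by blast
  qed
qed

lemma tr_assoc:
  fixes h :: "'a \<Rightarrow> nat"
  assumes bij: "bij_betw h UNIV N" and canc: "\<And>a x y. m a x = m a y \<Longrightarrow> x = y"
    and eq: "m (m x y) z = m (m x (m y z)) u"
  defines "g \<equiv> inv_into UNIV h"
  shows "loop_assoc N (\<lambda>x y. h (m (g x) (g y))) (h x) (h y) (h z) = h u"
proof -
  have gh: "g (h u) = u" for u using bij by (simp add: g_def bij_betw_inv_into_left)
  have hg: "x \<in> N \<Longrightarrow> h (g x) = x" for x using bij by (simp add: g_def bij_betw_inv_into_right)
  have hN: "h u \<in> N" for u using bij by (auto simp: bij_betw_def)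
  show ?thesis unfolding loop_assoc_def
  proof (rule the_equality)
    show "h u \<in> N \<and> h (m (g (h (m (g (h x)) (g (h y))))) (g (h z))) =
      h (m (g (h (m (g (h x)) (g (h (m (g (h y)) (g (h z)))))))) (g (h u)))"
      by (simp add: gh hN eq)
    fix v assume v: "v \<in> N \<and> h (m (g (h (m (g (h x)) (g (h y))))) (g (h z))) =
      h (m (g (h (m (g (h x)) (g (h (m (g (h y)) (g (h z)))))))) (g v))"
    then have "m (m x y) z = m (m x (m y z)) (g v)" by (simp add: gh) (metis gh)
    then have "g v = u" using eq canc by metis
    then show "v = h u" using v hg by metis
  qed
qed

lemma tr_comm:
  fixes h :: "'a \<Rightarrow> nat"
  assumes bij: "bij_betw h UNIV N" and canc: "\<And>a x y. m a x = m a y \<Longrightarrow> x = y"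
    and eq: "m x y = m (m y x) c"
  defines "g \<equiv> inv_into UNIV h"
  shows "loop_comm N (\<lambda>x y. h (m (g x) (g y))) (h x) (h y) = h c"
proof -
  have gh: "g (h u) = u" for u using bij by (simp add: g_def bij_betw_inv_into_left)
  have hg: "x \<in> N \<Longrightarrow> h (g x) = x" for x using bij by (simp add: g_def bij_betw_inv_into_right)
  have hN: "h u \<in> N" for u using bij by (auto simp: bij_betw_def)
  show ?thesis unfolding loop_comm_def
  proof (rule the_equality)
    show "h c \<in> N \<and> h (m (g (h x)) (g (h y))) = h (m (g (h (m (g (h y)) (g (h x))))) (g (h c)))"
      by (simp add: gh hN eq)
    fix v assume v: "v \<in> N \<and> h (m (g (h x)) (g (h y))) = h (m (g (h (m (g (h y)) (g (h x))))) (g v))"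
    then have "m x y = m (m y x) (g v)" by (simp add: gh) (metis gh)
    then have "g v = c" using eq canc by metis
    then show "v = h c" using v hg by metis
  qed
qed


theorem mainTheorem2:
  shows "\<exists>(M :: nat set) (mult :: nat \<Rightarrow> nat \<Rightarrow> nat) e a b c d.
    moufang_loop M mult e \<and> card M = 3 ^ 19 \<and>
    a \<in> M \<and> b \<in> M \<and> c \<in> M \<and> d \<in> M \<and>
    subloop_gen M mult {a, b, c, d} = M \<and>
    loop_assoc M mult a b c = e \<and> loop_assoc M mult a b d = e \<and>
    loop_assoc M mult a c d = e \<and> loop_assoc M mult b c d = e \<and>
    loop_assoc M mult (loop_comm M mult a b) c d \<noteq> e"
proof -
  have fin: "finite (UNIV::el set)" by simp
  obtain h :: "el \<Rightarrow> nat" where bij: "bij_betw h UNIV {0..<card (UNIV::el set)}"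
    using ex_bij_betw_finite_nat[OF fin] by blast
  define N where "N = {0..<card (UNIV::el set)}"
  define mult where "mult = (\<lambda>x y. h (lm (inv_into UNIV h x) (inv_into UNIV h y)))"
  have bijN: "bij_betw h UNIV N" using bij by (simp add: N_def)
  have hN: "h u \<in> N" for u using bijN by (auto simp: bij_betw_def)
  have injh: "inj h" using bijN by (simp add: bij_betw_def)
  have cardN: "card N = 3 ^ 19" by (simp add: N_def)
  have M1: "moufang_loop N mult (h e0)" using tr_moufang[OF bijN moufang_UNIV] by (simp add: mult_def)
  have G: "subloop_gen N mult {h gA, h gB, h gC, h gD} = N"
    using tr_gen[OF bijN gen_UNIV] by (simp add: mult_def)
  have A1: "loop_assoc N mult (h gA) (h gB) (h gC) = h e0"
    using tr_assoc[where m=lm, OF bijN lm_cancel as1] by (simp add: mult_def)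
  have A2: "loop_assoc N mult (h gA) (h gB) (h gD) = h e0"
    using tr_assoc[where m=lm, OF bijN lm_cancel as2] by (simp add: mult_def)
  have A3: "loop_assoc N mult (h gA) (h gC) (h gD) = h e0"
    using tr_assoc[where m=lm, OF bijN lm_cancel as3] by (simp add: mult_def)
  have A4: "loop_assoc N mult (h gB) (h gC) (h gD) = h e0"
    using tr_assoc[where m=lm, OF bijN lm_cancel as4] by (simp add: mult_def)
  have C: "loop_comm N mult (h gA) (h gB) = h k4"
    using tr_comm[where m=lm, OF bijN lm_cancel cm] by (simp add: mult_def)
  have A5: "loop_assoc N mult (h k4) (h gC) (h gD) = h tau"
    using tr_assoc[where m=lm, OF bijN lm_cancel as5] by (simp add: mult_def)
  have ne: "h tau \<noteq> h e0" using injh tau_ne by (metis injD)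
  show ?thesis
    by (rule exI[of _ N], rule exI[of _ mult], rule exI[of _ "h e0"], rule exI[of _ "h gA"],
        rule exI[of _ "h gB"], rule exI[of _ "h gC"], rule exI[of _ "h gD"])
       (simp add: M1 cardN hN G A1 A2 A3 A4 C A5 ne)
qed

end
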